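(* Let $A$ be a $\mathbb{Z}$-module and let $S'\subset S\subset\mathbb{N}$. Suppose that for each $n\in S$ there is a finite sequence $n'=n_0\Leftrightarrow_A n_1\Leftrightarrow_A\cdots\Leftrightarrow_A n_r=n$ ($r\ge0$) of elements of $S$ with $n'\in S'$. Then the homomorphism $\rho^A_{S,S'}\colon A[q]^S\to A[q]^{S'}$ induced by the identity of $A[q]$ is injective.
   Context: $q$ is an indeterminate; $A[q]$ is the $\mathbb{Z}[q]$-module of polynomials in $q$ with coefficients in $A$. For $n\in\mathbb{N}$, $\Phi_n(q)$ is the $n$th cyclotomic polynomial; for $S\subset\mathbb{N}$, $\Phi_S^*$ is the multiplicative subset of $\mathbb{Z}[q]$ generated by $\{\Phi_m(q):m\in S\}$, directed by divisibility, and $A[q]^S=\varprojlim_{f\in\Phi_S^*}A[q]/fA[q]$. $A$ is $p$-adically separated if $\bigcap_{j\ge0}p^jA=0$. For $m,n\in\mathbb{N}$ write $m\Leftrightarrow_A n$ if $m=n$, or $A=0$, or $m/n$ is an integer power (positive or negative exponent) of a prime $p$ such that $A$ is $p$-adically separated. *)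

theory Defs
  imports Complex_Main "HOL-Computational_Algebra.Polynomial" "HOL-Library.Multiset"
begin

definition zmult :: "int \<Rightarrow> 'a::ab_group_add \<Rightarrow> 'a" where
  "zmult k x = (if 0 \<le> k then (\<Sum>i<nat k. x) else - (\<Sum>i<nat (- k). x))"

text \<open>The Z[q]-module structure of A[q]: action of f in Z[q] on p in A[q].\<close>
definition zpoly_act :: "int poly \<Rightarrow> 'a::ab_group_add poly \<Rightarrow> 'a poly" where
  "zpoly_act f p = (\<Sum>i\<le>degree f. (pCons 0 ^^ i) (map_poly (zmult (coeff f i)) p))"

definition cyclotomic :: "nat \<Rightarrow> int poly" where
  "cyclotomic n = (THE p. map_poly of_int p =
     (\<Prod>k\<in>{k\<in>{1..n}. coprime k n}. [:- cis (2 * pi * real k / real n), 1:]))"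

definition cyc_mon :: "nat set \<Rightarrow> int poly set" where
  "cyc_mon S = {prod_mset (image_mset cyclotomic M) | M. set_mset M \<subseteq> S}"

definition zsub :: "int poly \<Rightarrow> 'a::ab_group_add poly set" where
  "zsub f = range (zpoly_act f)"

definition zcoset :: "int poly \<Rightarrow> 'a::ab_group_add poly \<Rightarrow> 'a poly set" where
  "zcoset f p = {p + h | h. h \<in> zsub f}"

text \<open>A[q]^S = inverse limit of A[q]/fA[q], f in Phi_S^*, directed by divisibility,
  as the set of compatible families (extensional outside Phi_S^*).\<close>
definition completion :: "nat set \<Rightarrow> (int poly \<Rightarrow> 'a::ab_group_add poly set) set" where
  "completion S = {x.
     (\<forall>f\<in>cyc_mon S. \<exists>p. x f = zcoset f p) \<and>
     (\<forall>f\<in>cyc_mon S. \<forall>g\<in>cyc_mon S. f dvd g \<longrightarrow>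
        (\<forall>p. x g = zcoset g p \<longrightarrow> x f = zcoset f p)) \<and>
     (\<forall>f. f \<notin> cyc_mon S \<longrightarrow> x f = undefined)}"

definition rho :: "nat set \<Rightarrow> (int poly \<Rightarrow> 'a::ab_group_add poly set) \<Rightarrow> (int poly \<Rightarrow> 'a poly set)" where
  "rho S' x = (\<lambda>f. if f \<in> cyc_mon S' then x f else undefined)"

definition padic_separated :: "'a::ab_group_add itself \<Rightarrow> nat \<Rightarrow> bool" where
  "padic_separated TYPE('a) p \<longleftrightarrow>
     (\<Inter>j. range (zmult (int p ^ j) :: 'a \<Rightarrow> 'a)) = {0}"

definition equiv_A :: "'a::ab_group_add itself \<Rightarrow> nat \<Rightarrow> nat \<Rightarrow> bool" where
  "equiv_A T m n \<longleftrightarrow> m = n \<or> (UNIV :: 'a set) = {0} \<or>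
     (\<exists>p k. prime p \<and> (m = n * p ^ k \<or> n = m * p ^ k) \<and> padic_separated T p)"

end

theory Submission
  imports Defs "HOL-Computational_Algebra.Computational_Algebra"
begin

definition prim :: "nat \<Rightarrow> complex set" where
  "prim n = {z. \<forall>d. z ^ d = 1 \<longleftrightarrow> n dvd d}"

definition Cp :: "nat \<Rightarrow> complex poly" where
  "Cp n = (\<Prod>z\<in>prim n. [:-z, 1:])"

lemma ord_exists:
  fixes z :: complex
  assumes "z ^ m = 1" "m > 0"
  shows "\<exists>e>0. \<forall>d. z ^ d = 1 \<longleftrightarrow> e dvd d"
proof -
  define e where "e = (LEAST e. e > 0 \<and> z ^ e = 1)"
  have e: "e > 0 \<and> z ^ e = 1" using LeastI[of "\<lambda>e. e>0 \<and> z^e=1" m] assms e_def by auto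
  have min: "\<And>k. 0 < k \<Longrightarrow> k < e \<Longrightarrow> z ^ k \<noteq> 1" using not_less_Least e_def by blast
  have "z ^ d = 1 \<longleftrightarrow> e dvd d" for d
  proof
    assume zd: "z ^ d = 1"
    have dd: "d = e * (d div e) + d mod e" by simp
    have "z ^ d = (z ^ e) ^ (d div e) * z ^ (d mod e)"
      by (subst dd) (simp only: power_add power_mult)
    hence z1: "z ^ (d mod e) = 1" using e zd by simp
    have "d mod e < e" using e by simp
    hence "d mod e = 0" using min[of "d mod e"] z1 by (cases "d mod e = 0") auto
    thus "e dvd d" by auto
  next
    assume "e dvd d" then obtain k where "d = e * k" by auto
    thus "z ^ d = 1" using e by (simp add: power_mult)
  qed
  thus ?thesis using e by blast
qed

lemma prim_pow: "z \<in> prim n \<Longrightarrow> z ^ n = 1"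
  by (auto simp: prim_def)

lemma prim_unique: "z \<in> prim n \<Longrightarrow> z \<in> prim m \<Longrightarrow> n = m"
  unfolding prim_def by (metis (mono_tags) dvd_antisym dvd_refl mem_Collect_eq)

lemma prim_finite: "n > 0 \<Longrightarrow> finite (prim n)"
proof -
  assume n: "n > 0"
  have "prim n \<subseteq> {z. z ^ n = 1}" using prim_pow by blast
  moreover have "finite {z::complex. z ^ n = 1}" using finite_roots_unity[of n] n by simp
  ultimately show ?thesis by (rule finite_subset)
qed

lemma prim_nonzero: "n > 0 \<Longrightarrow> z \<in> prim n \<Longrightarrow> z \<noteq> 0"
proof
  assume "n > 0" "z \<in> prim n" "z = 0"
  hence "(0::complex) ^ n = 1" using prim_pow by blast
  thus False using \<open>n > 0\<close> by (simp add: power_0_left)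
qed

lemma roots_unity_decomp:
  assumes "n > 0"
  shows "{z::complex. z ^ n = 1} = (\<Union>d\<in>{d. d dvd n}. prim d)"
proof safe
  fix z :: complex assume "z ^ n = 1"
  then obtain e where "e > 0" "\<forall>d. z ^ d = 1 \<longleftrightarrow> e dvd d" using ord_exists assms by blast
  then show "z \<in> (\<Union>d\<in>{d. d dvd n}. prim d)"
    using \<open>z ^ n = 1\<close> by (auto simp: prim_def)
next
  fix z d assume "d dvd n" "z \<in> prim d"
  thus "z ^ n = 1" by (auto simp: prim_def)
qed

lemma multiset_distinct_eq:
  assumes "size M = card (set_mset M)"
  shows "M = mset_set (set_mset M)"
proof -
  have sub: "mset_set (set_mset M) \<subseteq># M"
    by (metis mset_set_set_mset_msubset)
  have "size (M - mset_set (set_mset M)) = 0"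
    using assms sub by (simp add: size_Diff_submset)
  hence "M - mset_set (set_mset M) = {#}" by simp
  thus ?thesis using sub by (metis subset_mset.diff_add add_0)
qed

lemma roots_prod:
  assumes "n > 0" "c \<noteq> 0"
  shows "monom 1 n - [:c:] = (\<Prod>z\<in>{z::complex. z ^ n = c}. [:-z, 1:])"
proof -
  define P where "P = (monom 1 n - [:c:] :: complex poly)"
  have "P = monom 1 n + [:-c:]" by (simp add: P_def)
  hence degP: "degree P = n" using assms
    by (simp add: degree_add_eq_left degree_monom_eq)
  have cc: "coeff [:c:] n = 0" using assms by (cases n) auto
  have leadP: "lead_coeff P = 1" using assms degP cc unfolding P_def
    by (simp add: coeff_diff)
  have P0: "P \<noteq> 0" using leadP by auto
  have roots: "{x. poly P x = 0} = {z. z ^ n = c}"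
    by (auto simp: P_def poly_monom)
  have "size (proots P) = n" using size_proots_complex degP by simp
  moreover have "card {z::complex. z ^ n = c} = n" using card_nth_roots assms by blast
  ultimately have "size (proots P) = card (set_mset (proots P))"
    using P0 roots by simp
  hence eq: "proots P = mset_set {z. z ^ n = c}"
    using multiset_distinct_eq P0 roots by (metis set_count_proots)
  have "P = smult (lead_coeff P) (\<Prod>x\<in>#proots P. [:-x, 1:])"
    by (rule complex_poly_decompose_multiset[symmetric])
  also have "\<dots> = (\<Prod>z\<in>{z::complex. z ^ n = c}. [:-z, 1:])"
    by (simp add: leadP eq prod_unfold_prod_mset)
  finally show ?thesis by (simp add: P_def)
qed

lemma cis_mod:
  assumes "n > 0"
  shows "cis (2 * pi * real j / real n) = cis (2 * pi * real (j mod n) / real n)"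
proof -
  have "real j = real n * real (j div n) + real (j mod n)"
    by (metis of_nat_add of_nat_mult div_mult_mod_eq mult.commute)
  hence "2 * pi * real j / real n = 2 * pi * real (j div n) + 2 * pi * real (j mod n) / real n"
    using assms by (simp add: field_simps)
  hence "cis (2 * pi * real j / real n) = cis (2 * pi * real (j div n)) * cis (2 * pi * real (j mod n) / real n)"
    by (simp only: cis_mult)
  also have "cis (2 * pi * real (j div n)) = 1"
    by (rule cis_multiple_2pi) simp
  finally show ?thesis by simp
qed

lemma cis_eq1:
  assumes "n > 0"
  shows "cis (2 * pi * real j / real n) = 1 \<longleftrightarrow> n dvd j"
proof
  assume "n dvd j"
  then obtain k where "j = n * k" by auto
  hence "2 * pi * real j / real n = 2 * pi * real k" using assms by simp
  thus "cis (2 * pi * real j / real n) = 1" by (simp add: cis_multiple_2pi)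
next
  assume h: "cis (2 * pi * real j / real n) = 1"
  have inj: "inj_on (\<lambda>k. cis (2 * pi * real k / real n)) {..<n}"
    using bij_betw_roots_unity[OF assms] by (simp add: bij_betw_def)
  have "cis (2 * pi * real (j mod n) / real n) = cis (2 * pi * real 0 / real n)"
    using h cis_mod[OF assms, of j] by simp
  hence "j mod n = 0" using inj assms by (auto simp: inj_on_def)
  thus "n dvd j" by auto
qed

lemma cis_pow_eq1:
  assumes "n > 0"
  shows "cis (2 * pi * real k / real n) ^ d = 1 \<longleftrightarrow> n dvd k * d"
proof -
  have "cis (2 * pi * real k / real n) ^ d = cis (2 * pi * real (k * d) / real n)"
    by (simp add: DeMoivre field_simps)
  thus ?thesis using cis_eq1[OF assms, of "k * d"] by simp
qed

lemma cis_prim_bij: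
  assumes "n > 0"
  shows "bij_betw (\<lambda>k. cis (2 * pi * real k / real n)) {k\<in>{1..n}. coprime k n} (prim n)"
  unfolding bij_betw_def
proof (intro conjI)
  show "inj_on (\<lambda>k. cis (2 * pi * real k / real n)) {k\<in>{1..n}. coprime k n}"
  proof (rule inj_onI)
    fix k l assume k: "k \<in> {k\<in>{1..n}. coprime k n}" and l: "l \<in> {k\<in>{1..n}. coprime k n}"
      and eq: "cis (2 * pi * real k / real n) = cis (2 * pi * real l / real n)"
    have inj: "inj_on (\<lambda>k. cis (2 * pi * real k / real n)) {..<n}"
      using bij_betw_roots_unity[OF assms] by (simp add: bij_betw_def)
    have "cis (2 * pi * real (k mod n) / real n) = cis (2 * pi * real (l mod n) / real n)"
      using eq cis_mod[OF assms, of k] cis_mod[OF assms, of l] by simp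
    hence m: "k mod n = l mod n" using inj assms by (auto simp: inj_on_def)
    show "k = l"
      using m k l by (cases "k = n"; cases "l = n") (auto simp: mod_less)
  qed
next
  show "(\<lambda>k. cis (2 * pi * real k / real n)) ` {k\<in>{1..n}. coprime k n} = prim n"
  proof safe
    fix k assume k: "k \<in> {1..n}" "coprime k n"
    have "n dvd k * d \<longleftrightarrow> n dvd d" for d
      using coprime_dvd_mult_right_iff[of n k d] k(2) coprime_commute[of k n] by simp
    thus "cis (2 * pi * real k / real n) \<in> prim n"
      using cis_pow_eq1[OF assms, of k] by (simp add: prim_def)
  next
    fix z assume z: "z \<in> prim n"
    hence "z ^ n = 1" by (rule prim_pow)
    then obtain j where j: "j < n" "z = cis (2 * pi * real j / real n)"
      using bij_betw_roots_unity[OF assms] by (auto simp: bij_betw_def)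
    have zd: "\<And>d. n dvd j * d \<longleftrightarrow> n dvd d"
      using z j cis_pow_eq1[OF assms, of j] by (simp add: prim_def)
    show "z \<in> (\<lambda>k. cis (2 * pi * real k / real n)) ` {k\<in>{1..n}. coprime k n}"
    proof (cases "j = 0")
      case True
      hence "n dvd 1" using zd[of 1] by simp
      hence "n = 1" by simp
      moreover have "z = cis (2 * pi * real 1 / real 1)" using True j \<open>n = 1\<close> by simp
      ultimately show ?thesis by (intro image_eqI[of _ _ 1]) auto
    next
      case False
      define g where "g = gcd j n"
      have g0: "g > 0" using assms g_def by simp
      obtain s where s: "j = g * s" unfolding g_def by (metis gcd_dvd1 dvdE)
      obtain t where t: "n = g * t" unfolding g_def by (metis gcd_dvd2 dvdE)
      have "j * (n div g) = (j div g) * n"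
        using g0 s t by simp
      hence "n dvd j * (n div g)" by simp
      hence "n dvd n div g" using zd by blast
      moreover have "n div g > 0" using assms g0 g_def
        by (simp add: div_greater_zero_iff gcd_le2_nat)
      ultimately have "n \<le> n div g" by (simp add: dvd_imp_le)
      hence "g \<le> 1" using assms g0
        by (meson div_less_dividend leD leI)
      hence "g = 1" using g0 by linarith
      hence "coprime j n" using g_def by (simp add: coprime_iff_gcd_eq_1)
      thus ?thesis using j False by (intro image_eqI[of _ _ j]) auto
    qed
  qed
qed

lemma Cdef_eq:
  assumes "n > 0"
  shows "(\<Prod>k\<in>{k\<in>{1..n}. coprime k n}. [:- cis (2 * pi * real k / real n), 1:]) = Cp n"
  unfolding Cp_def using prod.reindex_bij_betw[OF cis_prim_bij[OF assms], of "\<lambda>z. [:-z, 1:]"] by simp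

lemma Cp_monic: "n > 0 \<Longrightarrow> lead_coeff (Cp n) = 1"
  unfolding Cp_def by (simp add: lead_coeff_prod)

lemma Cp_nonzero: "n > 0 \<Longrightarrow> Cp n \<noteq> 0"
proof
  assume "n > 0" "Cp n = 0"
  hence "lead_coeff (Cp n) = 0" by simp
  thus False using Cp_monic[OF \<open>n > 0\<close>] by simp
qed

lemma xn1_factor:
  assumes "n > 0"
  shows "monom 1 n - 1 = (\<Prod>d\<in>{d. d dvd n}. Cp d)"
proof -
  have "monom 1 n - 1 = monom 1 n - [:1::complex:]" by (simp add: one_pCons)
  also have "\<dots> = (\<Prod>z\<in>{z::complex. z ^ n = 1}. [:-z, 1:])"
    using roots_prod[OF assms] by simp
  also have "\<dots> = (\<Prod>z\<in>(\<Union>d\<in>{d. d dvd n}. prim d). [:-z, 1:])"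
    using roots_unity_decomp[OF assms] by simp
  also have "\<dots> = (\<Prod>d\<in>{d. d dvd n}. Cp d)"
    unfolding Cp_def
  proof (rule prod.UNION_disjoint)
    show "finite {d. d dvd n}" using assms by simp
    show "\<forall>i\<in>{d. d dvd n}. finite (prim i)"
      using assms prim_finite by (auto intro!: prim_finite dest: dvd_pos_nat)
    show "\<forall>i\<in>{d. d dvd n}. \<forall>j\<in>{d. d dvd n}. i \<noteq> j \<longrightarrow> prim i \<inter> prim j = {}"
      using prim_unique by blast
  qed
  finally show ?thesis .
qed

abbreviation mi :: "int poly \<Rightarrow> complex poly" where "mi \<equiv> map_poly of_int"

lemma mi_add: "mi (p + q) = mi p + mi q"
  by (simp add: poly_eq_iff coeff_map_poly)

lemma mi_diff: "mi (p - q) = mi p - mi q"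
  by (simp add: poly_eq_iff coeff_map_poly)

lemma mi_mult: "mi (p * q) = mi p * mi q"
  by (simp add: poly_eq_iff coeff_map_poly coeff_mult of_int_sum)

lemma mi_one: "mi 1 = 1"
  by simp

lemma mi_prod: "mi (\<Prod>x\<in>A. f x) = (\<Prod>x\<in>A. mi (f x))"
  by (induction A rule: infinite_finite_induct) (auto simp: mi_mult)

lemma mi_monom: "mi (monom c n) = monom (of_int c) n"
  by (simp add: map_poly_monom)

lemma mi_const: "mi [:c:] = [:of_int c:]"
  by (cases "c = 0") (simp_all add: map_poly_pCons)

lemma mi_pcompose: "mi (pcompose f g) = pcompose (mi f) (mi g)"
proof (induction f rule: pCons_induct)
  case (pCons a f)
  show ?case using pCons.hyps by (simp add: pcompose_pCons map_poly_pCons mi_add mi_mult pCons.IH mi_const)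
qed simp

lemma mi_inj: "mi p = mi q \<Longrightarrow> p = q"
  by (simp add: poly_eq_iff coeff_map_poly)

lemma mi_eq0: "mi p = 0 \<longleftrightarrow> p = 0"
  using mi_inj[of p 0] by auto

lemma mi_degree: "degree (mi p) = degree p"
  by (cases "p = 0") (simp_all add: degree_map_poly)

lemma mi_lead: "lead_coeff (mi p) = of_int (lead_coeff p)"
  by (simp add: mi_degree coeff_map_poly)

lemma Cp_int: "n > 0 \<Longrightarrow> \<exists>P. mi P = Cp n"
proof (induction n rule: less_induct)
  case (less n)
  define D where "D = {d. d dvd n \<and> d < n}"
  have finD: "finite D" using less.prems unfolding D_def by simp
  have "\<forall>d\<in>D. \<exists>P. mi P = Cp d"
    using less unfolding D_def by (auto intro: dvd_pos_nat[OF less.prems])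
  then obtain F where F: "\<forall>d\<in>D. mi (F d) = Cp d" by metis
  define G where "G = (\<Prod>d\<in>D. F d)"
  have mapG: "mi G = (\<Prod>d\<in>D. Cp d)"
    unfolding G_def mi_prod using F by (intro prod.cong) auto
  have ins: "{d. d dvd n} = insert n D" and nD: "n \<notin> D" unfolding D_def
    using less.prems by (auto simp: dvd_imp_le le_neq_implies_less)
  have fac: "monom 1 n - 1 = Cp n * mi G"
    using xn1_factor[OF less.prems] unfolding ins mapG using finD nD by simp
  have leadmG: "lead_coeff (mi G) = 1"
    unfolding mapG lead_coeff_prod using D_def by (auto intro!: prod.neutral Cp_monic dvd_pos_nat[OF less.prems])
  hence leadG: "lead_coeff G = 1" unfolding mi_lead by simp
  hence G0: "G \<noteq> 0" by auto
  obtain Q R where qr: "pseudo_divmod (monom 1 n - 1) G = (Q, R)" by force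
  have e1: "monom 1 n - 1 = G * Q + R"
    using pseudo_divmod(1)[OF G0 qr] leadG by simp
  have e2: "R = 0 \<or> degree R < degree G"
    using pseudo_divmod(2)[OF G0 qr] .
  have "mi (monom 1 n - 1) = mi (G * Q + R)" using e1 by simp
  also have "\<dots> = mi G * mi Q + mi R" by (simp only: mi_add mi_mult)
  finally have "mi (monom 1 n - 1) = mi G * mi Q + mi R" .
  hence "monom 1 n - 1 = mi G * mi Q + mi R"
    by (simp add: mi_diff mi_monom)
  hence key: "mi G * (Cp n - mi Q) = mi R"
    using fac by (simp add: algebra_simps)
  have "Cp n = mi Q"
  proof (rule ccontr)
    assume ne: "Cp n \<noteq> mi Q"
    have mG0: "mi G \<noteq> 0" using G0 mi_eq0 by simp
    hence "mi R \<noteq> 0" using key ne by auto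
    hence "R \<noteq> 0" by auto
    hence "degree R < degree G" using e2 by simp
    moreover have "degree (mi G * (Cp n - mi Q)) = degree (mi G) + degree (Cp n - mi Q)"
      using mG0 ne by (intro degree_mult_eq) auto
    ultimately show False using key by (simp add: mi_degree)
  qed
  thus ?case by metis
qed

lemma cyclotomic_map:
  assumes "n > 0"
  shows "mi (cyclotomic n) = Cp n"
proof -
  obtain P where P: "mi P = Cp n" using Cp_int assms by blast
  have "(THE p. mi p = Cp n) = P"
    by (rule the_equality) (use P mi_inj in auto)
  thus ?thesis unfolding cyclotomic_def Cdef_eq[OF assms] using P by simp
qed

lemma cyclotomic_monic: "n > 0 \<Longrightarrow> lead_coeff (cyclotomic n) = 1"
  using cyclotomic_map[of n] Cp_monic[of n] mi_lead[of "cyclotomic n"] by simp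

lemma prim_pow_char:
  assumes p: "prime p" and N: "N > 0"
  shows "\<eta> ^ p \<in> prim N \<longleftrightarrow> \<eta> \<in> prim (N * p) \<or> (\<not> p dvd N \<and> \<eta> \<in> prim N)"
proof
  assume h: "\<eta> ^ p \<in> prim N"
  have E0: "\<And>d. \<eta> ^ (p * d) = 1 \<longleftrightarrow> N dvd d"
    using h by (simp add: prim_def power_mult)
  have p0: "p > 0" using p prime_gt_0_nat by blast
  have "\<eta> ^ (p * N) = 1" using E0 by simp
  then obtain e where e0: "e > 0" and e: "\<And>d. \<eta> ^ d = 1 \<longleftrightarrow> e dvd d"
    using ord_exists[of \<eta> "p * N"] p0 N by auto
  have E: "\<And>d. e dvd p * d \<longleftrightarrow> N dvd d" using E0 e by blast
  have "e dvd p * N" using E by simp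
  moreover have "N dvd e" using E[of e] by simp
  then obtain t where t: "e = N * t" by (elim dvdE)
  ultimately have "N * t dvd N * p" by (simp add: mult.commute)
  hence "t dvd p" using N by simp
  hence "t = 1 \<or> t = p" using p by (simp add: prime_nat_iff)
  thus "\<eta> \<in> prim (N * p) \<or> (\<not> p dvd N \<and> \<eta> \<in> prim N)"
  proof
    assume "t = p"
    thus ?thesis using e t by (simp add: prim_def)
  next
    assume t1: "t = 1"
    have "\<not> p dvd N"
    proof
      assume "p dvd N"
      then obtain s where s: "N = p * s" by (elim dvdE)
      have "e dvd p * s" using t1 t s by simp
      hence "N dvd s" using E by blast
      moreover have "s > 0" using s N by (cases s) auto
      ultimately have "N \<le> s" by (simp add: dvd_imp_le)
      moreover have "s < N" using s p0 \<open>s > 0\<close> prime_gt_1_nat[OF p] by simp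
      ultimately show False by simp
    qed
    thus ?thesis using e t t1 by (simp add: prim_def)
  qed
next
  assume h: "\<eta> \<in> prim (N * p) \<or> (\<not> p dvd N \<and> \<eta> \<in> prim N)"
  have p0: "p > 0" using p prime_gt_0_nat by blast
  show "\<eta> ^ p \<in> prim N"
    using h
  proof
    assume "\<eta> \<in> prim (N * p)"
    hence "\<And>d. \<eta> ^ (p * d) = 1 \<longleftrightarrow> N * p dvd p * d" by (simp add: prim_def)
    moreover have "\<And>d. N * p dvd p * d \<longleftrightarrow> N dvd d" using p0 by (simp add: mult.commute)
    ultimately show ?thesis by (simp add: prim_def power_mult)
  next
    assume a: "\<not> p dvd N \<and> \<eta> \<in> prim N"
    hence "\<And>d. \<eta> ^ (p * d) = 1 \<longleftrightarrow> N dvd p * d" by (simp add: prim_def)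
    moreover have "coprime N p" using a p prime_imp_coprime[of p N] by (simp add: coprime_commute)
    hence "\<And>d. N dvd p * d \<longleftrightarrow> N dvd d" using coprime_dvd_mult_right_iff by blast
    ultimately show ?thesis by (simp add: prim_def power_mult)
  qed
qed

lemma Cp_pcomp:
  assumes p: "prime p" and N: "N > 0"
  shows "pcompose (Cp N) (monom 1 p) = Cp (N * p) * (if p dvd N then 1 else Cp N)"
proof -
  have p0: "p > 0" using p prime_gt_0_nat by blast
  have "pcompose (Cp N) (monom 1 p) = (\<Prod>z\<in>prim N. pcompose [:-z, 1:] (monom 1 p))"
    unfolding Cp_def by (rule pcompose_prod)
  also have "\<dots> = (\<Prod>z\<in>prim N. monom 1 p - [:z:])"
  proof (rule prod.cong)
    fix z :: complex
    have "pcompose [:-z, 1:] (monom 1 p) = [:-z:] + monom 1 p"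
      by (simp add: pcompose_pCons)
    also have "\<dots> = monom 1 p - [:z:]" by (simp add: algebra_simps)
    finally show "pcompose [:-z, 1:] (monom 1 p) = monom 1 p - [:z:]" .
  qed simp
  also have "\<dots> = (\<Prod>z\<in>prim N. \<Prod>\<eta>\<in>{\<eta>. \<eta> ^ p = z}. [:-\<eta>, 1:])"
    by (rule prod.cong) (use roots_prod p0 prim_nonzero[OF N] in auto)
  also have "\<dots> = (\<Prod>\<eta>\<in>(\<Union>z\<in>prim N. {\<eta>. \<eta> ^ p = z}). [:-\<eta>, 1:])"
  proof (rule prod.UNION_disjoint[symmetric])
    show "finite (prim N)" using prim_finite N by blast
    show "\<forall>z\<in>prim N. finite {\<eta>::complex. \<eta> ^ p = z}" using p0 by (auto intro: finite_nth_roots)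
    show "\<forall>z\<in>prim N. \<forall>w\<in>prim N. z \<noteq> w \<longrightarrow> {\<eta>::complex. \<eta> ^ p = z} \<inter> {\<eta>. \<eta> ^ p = w} = {}"
      by auto
  qed
  also have "(\<Union>z\<in>prim N. {\<eta>. \<eta> ^ p = z}) = prim (N * p) \<union> (if p dvd N then {} else prim N)"
    using prim_pow_char[OF p N] by auto
  also have "(\<Prod>\<eta>\<in>prim (N * p) \<union> (if p dvd N then {} else prim N). [:-\<eta>, 1:]) =
      Cp (N * p) * (\<Prod>\<eta>\<in>(if p dvd N then {} else prim N). [:-\<eta>, 1:])"
    unfolding Cp_def
  proof (rule prod.union_disjoint)
    show "finite (prim (N * p))" using prim_finite N p0 by simp
    show "finite (if p dvd N then {} else prim N)" using prim_finite N by simp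
    have "N * p \<noteq> N" using N prime_gt_1_nat[OF p] by simp
    thus "prim (N * p) \<inter> (if p dvd N then {} else prim N) = {}"
      using prim_unique[of _ "N * p" N] by auto
  qed
  also have "(\<Prod>\<eta>\<in>(if p dvd N then {} else prim N). [:-\<eta>, 1:]) = (if p dvd N then 1 else Cp N)"
    by (simp add: Cp_def)
  finally show ?thesis .
qed

lemma cyc_pcomp:
  assumes p: "prime p" and N: "N > 0"
  shows "pcompose (cyclotomic N) (monom 1 p) =
         cyclotomic (N * p) * (if p dvd N then 1 else cyclotomic N)"
proof (rule mi_inj)
  have p0: "p > 0" using p prime_gt_0_nat by blast
  have "mi (pcompose (cyclotomic N) (monom 1 p)) = pcompose (Cp N) (monom 1 p)"
    by (simp add: mi_pcompose mi_monom cyclotomic_map[OF N])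
  also have "\<dots> = Cp (N * p) * (if p dvd N then 1 else Cp N)" by (rule Cp_pcomp[OF p N])
  also have "\<dots> = mi (cyclotomic (N * p) * (if p dvd N then 1 else cyclotomic N))"
    using N p0 by (simp add: mi_mult cyclotomic_map)
  finally show "mi (pcompose (cyclotomic N) (monom 1 p)) =
      mi (cyclotomic (N * p) * (if p dvd N then 1 else cyclotomic N))" .
qed

lemma frob_add:
  fixes x y :: "'a::comm_ring_1"
  assumes p: "prime p"
  shows "of_nat p dvd (x + y) ^ p - x ^ p - y ^ p"
proof -
  have p0: "p \<noteq> 0" using p by auto
  define t where "t k = of_nat (p choose k) * x ^ k * y ^ (p - k)" for k
  define e where "e k = (if k = p then x ^ p else 0) + (if k = 0 then y ^ p else 0)" for k
  have s1: "(x + y) ^ p = (\<Sum>k\<le>p. t k)" by (simp add: binomial_ring t_def)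
  have s2: "(\<Sum>k\<le>p. e k) = x ^ p + y ^ p" by (simp add: e_def sum.distrib)
  have "of_nat p dvd t k - e k" if "k \<in> {..p}" for k
  proof (cases "k = 0 \<or> k = p")
    case True
    thus ?thesis using p0 by (auto simp: t_def e_def)
  next
    case False
    hence "k < p" "k \<noteq> 0" using that by auto
    hence "p dvd p choose k" using dvd_choose_prime p p0 by blast
    then obtain c where "p choose k = p * c" by (elim dvdE)
    hence "t k = of_nat p * (of_nat c * x ^ k * y ^ (p - k))" by (simp add: t_def mult.assoc)
    moreover have "e k = 0" using False by (simp add: e_def)
    ultimately show ?thesis by simp
  qed
  hence "of_nat p dvd (\<Sum>k\<le>p. t k - e k)" by (rule dvd_sum)
  also have "(\<Sum>k\<le>p. t k - e k) = (x + y) ^ p - x ^ p - y ^ p"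
    by (simp add: sum_subtractf s1 s2)
  finally show ?thesis .
qed

lemma frob_nat:
  assumes p: "prime p"
  shows "int p dvd int n ^ p - int n"
proof (induction n)
  case 0
  thus ?case using p by (simp add: power_0_left)
next
  case (Suc n)
  have "int (Suc n) ^ p - int (Suc n) = ((int n + 1) ^ p - int n ^ p - 1 ^ p) + (int n ^ p - int n)"
    by (simp add: add.commute)
  moreover have "int p dvd (int n + 1) ^ p - int n ^ p - 1 ^ p"
    using frob_add[OF p, of "int n" 1] by simp
  ultimately show ?case using Suc.IH by (metis dvd_add)
qed

lemma frob_int:
  assumes p: "prime p"
  shows "int p dvd a ^ p - a"
proof (cases "a \<ge> 0")
  case True
  define n where "n = nat a"
  have a: "a = int n" using True n_def by simp
  show ?thesis unfolding a by (rule frob_nat[OF p])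
next
  case False
  define n where "n = nat (- a)"
  have a: "a = - int n" using False n_def by simp
  have p0: "p \<noteq> 0" using p by auto
  have A: "int p dvd (- int n + int n) ^ p - (- int n) ^ p - int n ^ p"
    by (rule frob_add[OF p])
  have B: "int p dvd int n ^ p - int n" by (rule frob_nat[OF p])
  have C: "int p dvd - ((- int n + int n) ^ p - (- int n) ^ p - int n ^ p)"
    using A by (simp only: dvd_minus_iff)
  have z: "(- int n + int n) ^ p = 0" using p0 by simp
  have "a ^ p - a = - ((- int n + int n) ^ p - (- int n) ^ p - int n ^ p) - (int n ^ p - int n)"
    using z by (simp only: a)
  thus ?thesis using dvd_diff[OF C B] by (simp only:)
qed

lemma pCons_as_sum: "pCons a f = [:a:] + [:0, 1:] * (f :: 'a::comm_ring_1 poly)"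
  by (simp add: mult_pCons_left)

lemma frob_poly:
  fixes f :: "int poly"
  assumes p: "prime p"
  shows "(of_nat p :: int poly) dvd f ^ p - pcompose f (monom 1 p)"
proof (induction f rule: pCons_induct)
  case 0
  thus ?case using p by (simp add: power_0_left)
next
  case (pCons a f)
  define A where "A = [:a:]"
  define B where "B = [:0, 1:] * f"
  have p0: "p \<noteq> 0" using p by auto
  have X: "[:0, 1::int:] ^ p = monom 1 p" by (simp add: monom_altdef)
  have f1: "pCons a f = A + B" unfolding A_def B_def by (rule pCons_as_sum)
  have f2: "pcompose (pCons a f) (monom 1 p) = A + monom 1 p * pcompose f (monom 1 p)"
    by (simp add: pcompose_pCons A_def)
  have d1: "(of_nat p :: int poly) dvd (A + B) ^ p - A ^ p - B ^ p" by (rule frob_add[OF p])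
  have "A ^ p - A = [:a ^ p - a:]" by (simp add: A_def poly_const_pow)
  moreover have "[:int p:] dvd [:a ^ p - a:]" using frob_int[OF p] by simp
  ultimately have d2: "(of_nat p :: int poly) dvd A ^ p - A" by (simp add: of_nat_poly)
  have Bp: "B ^ p = monom 1 p * f ^ p" unfolding B_def by (simp only: power_mult_distrib X)
  have "B ^ p - monom 1 p * pcompose f (monom 1 p) = monom 1 p * (f ^ p - pcompose f (monom 1 p))"
    by (simp only: Bp right_diff_distrib)
  hence d3: "(of_nat p :: int poly) dvd B ^ p - monom 1 p * pcompose f (monom 1 p)"
    using pCons.IH by simp
  have "(pCons a f) ^ p - pcompose (pCons a f) (monom 1 p) =
     (A + B) ^ p - (A + monom 1 p * pcompose f (monom 1 p))"
    by (simp only: f2) (simp only: f1)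
  also have "\<dots> = ((A + B) ^ p - A ^ p - B ^ p) + (A ^ p - A) + (B ^ p - monom 1 p * pcompose f (monom 1 p))"
    by (simp add: algebra_simps)
  finally have "(pCons a f) ^ p - pcompose (pCons a f) (monom 1 p) =
     ((A + B) ^ p - A ^ p - B ^ p) + (A ^ p - A) + (B ^ p - monom 1 p * pcompose f (monom 1 p))" .
  thus ?case using d1 d2 d3 by (metis dvd_add)
qed

lemma cancel_monic:
  fixes f g :: "int poly"
  assumes p: "prime p" and f: "lead_coeff f = 1" and d: "(of_nat p :: int poly) dvd f * g"
  shows "(of_nat p :: int poly) dvd g"
proof -
  have "[:int p:] dvd f * g" using d by (simp add: of_nat_poly)
  hence "int p dvd content (f * g)" by (simp add: const_poly_dvd_iff_dvd_content)
  hence "int p dvd content f * content g" by (simp add: content_mult)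
  moreover have "\<not> int p dvd content f"
  proof
    assume "int p dvd content f"
    moreover have "content f dvd lead_coeff f" by (rule content_dvd_coeff)
    ultimately have "int p dvd 1" using f by (metis dvd_trans)
    thus False using p by simp
  qed
  moreover have "prime (int p)" using p by simp
  ultimately have "int p dvd content g" using prime_dvd_mult_iff by blast
  thus ?thesis by (simp add: of_nat_poly const_poly_dvd_iff_dvd_content)
qed

definition PR :: "nat \<Rightarrow> nat \<Rightarrow> nat \<Rightarrow> bool" where
  "PR p a b \<longleftrightarrow> (\<exists>c u. (of_nat p :: int poly) dvd cyclotomic b ^ c - cyclotomic a * u)"

lemma PR_refl: "PR p a a"
  unfolding PR_def by (rule exI[of _ 1], rule exI[of _ 1]) simp

lemma dvd_pow_diff:
  fixes x y P :: "'a::comm_ring_1"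
  assumes "P dvd x - y"
  shows "P dvd x ^ k - y ^ k"
proof (induction k)
  case (Suc k)
  have "x ^ Suc k - y ^ Suc k = x * (x ^ k - y ^ k) + y ^ k * (x - y)"
    by (simp add: algebra_simps)
  thus ?case using Suc.IH assms by (metis dvd_add dvd_mult dvd_mult2)
qed simp

lemma PR_trans:
  assumes "PR p a b" "PR p b e"
  shows "PR p a e"
proof -
  obtain c u where 1: "(of_nat p :: int poly) dvd cyclotomic b ^ c - cyclotomic a * u"
    using assms(1) unfolding PR_def by blast
  obtain c2 s where 2: "(of_nat p :: int poly) dvd cyclotomic e ^ c2 - cyclotomic b * s"
    using assms(2) unfolding PR_def by blast
  have 3: "(of_nat p :: int poly) dvd (cyclotomic e ^ c2) ^ c - (cyclotomic b * s) ^ c"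
    using dvd_pow_diff[OF 2] .
  have "cyclotomic e ^ (c2 * c) - cyclotomic a * (u * s ^ c) =
     ((cyclotomic e ^ c2) ^ c - (cyclotomic b * s) ^ c) + s ^ c * (cyclotomic b ^ c - cyclotomic a * u)"
    by (simp add: power_mult power_mult_distrib algebra_simps)
  hence "(of_nat p :: int poly) dvd cyclotomic e ^ (c2 * c) - cyclotomic a * (u * s ^ c)"
    using 1 3 by (metis dvd_add dvd_mult)
  thus ?thesis unfolding PR_def by blast
qed

lemma PR_up:
  assumes p: "prime p" and N: "N > 0"
  shows "PR p (N * p) N"
proof -
  have "(of_nat p :: int poly) dvd cyclotomic N ^ p - pcompose (cyclotomic N) (monom 1 p)"
    by (rule frob_poly[OF p])
  thus ?thesis unfolding PR_def cyc_pcomp[OF p N] by blast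
qed

lemma PR_down:
  assumes p: "prime p" and N: "N > 0"
  shows "PR p N (N * p)"
proof -
  have p0: "p > 0" using p prime_gt_0_nat by blast
  have F: "(of_nat p :: int poly) dvd cyclotomic N ^ p - pcompose (cyclotomic N) (monom 1 p)"
    by (rule frob_poly[OF p])
  obtain q where q: "p = Suc (Suc q)" using prime_gt_1_nat[OF p]
    by (metis less_imp_Suc_add plus_1_eq_Suc)
  have pw: "cyclotomic N ^ p = cyclotomic N * cyclotomic N ^ (p - 1)"
    using q by simp
  have pw2: "cyclotomic N ^ (p - 1) = cyclotomic N * cyclotomic N ^ q"
    using q by simp
  show ?thesis
  proof (cases "p dvd N")
    case True
    have E: "cyclotomic (N * p) ^ 1 - cyclotomic N * cyclotomic N ^ (p - 1) =
          - (cyclotomic N ^ p - pcompose (cyclotomic N) (monom 1 p))"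
      using True by (simp add: cyc_pcomp[OF p N] pw)
    have "(of_nat p :: int poly) dvd cyclotomic (N * p) ^ 1 - cyclotomic N * cyclotomic N ^ (p - 1)"
      by (simp only: E dvd_minus_iff F)
    thus ?thesis unfolding PR_def by blast
  next
    case False
    have E: "cyclotomic N * (cyclotomic (N * p) - cyclotomic N ^ (p - 1)) =
          - (cyclotomic N ^ p - pcompose (cyclotomic N) (monom 1 p))"
      using False by (simp add: cyc_pcomp[OF p N] pw algebra_simps)
    have "(of_nat p :: int poly) dvd cyclotomic N * (cyclotomic (N * p) - cyclotomic N ^ (p - 1))"
      by (simp only: E dvd_minus_iff F)
    hence "(of_nat p :: int poly) dvd cyclotomic (N * p) - cyclotomic N ^ (p - 1)"
      using cancel_monic[OF p cyclotomic_monic[OF N]] by blast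
    hence "(of_nat p :: int poly) dvd cyclotomic (N * p) ^ 1 - cyclotomic N * cyclotomic N ^ q"
      by (simp only: pw2 power_one_right)
    thus ?thesis unfolding PR_def by blast
  qed
qed

lemma PR_powk:
  assumes p: "prime p" and N: "N > 0"
  shows "PR p (N * p ^ k) N \<and> PR p N (N * p ^ k)"
proof (induction k)
  case 0
  show ?case by (simp add: PR_refl)
next
  case (Suc k)
  have p0: "p > 0" using p prime_gt_0_nat by blast
  have Nk: "N * p ^ k > 0" using N p0 by simp
  have e: "N * p ^ Suc k = (N * p ^ k) * p" by (simp add: mult.assoc mult.commute)
  show ?case
    using PR_up[OF p Nk] PR_down[OF p Nk] Suc.IH PR_trans unfolding e by blast
qed

lemma ideal_pow:
  fixes x y :: "'a::comm_ring_1"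
  shows "\<exists>s t. (x + y) ^ (a + j) = x ^ a * s + y ^ j * t"
proof (induction a arbitrary: j)
  case 0
  show ?case by (rule exI[of _ "(x + y) ^ j"], rule exI[of _ 0]) simp
next
  case (Suc a)
  note outer = Suc.IH
  show ?case
  proof (induction j)
    case 0
    show ?case by (rule exI[of _ 0], rule exI[of _ "(x + y) ^ Suc a"]) simp
  next
    case (Suc j)
    obtain s1 t1 where 1: "(x + y) ^ (a + Suc j) = x ^ a * s1 + y ^ Suc j * t1"
      using outer by blast
    obtain s2 t2 where 2: "(x + y) ^ (Suc a + j) = x ^ Suc a * s2 + y ^ j * t2"
      using Suc.IH by blast
    have "(x + y) ^ (Suc a + Suc j) = (x + y) ^ (a + Suc j) * x + (x + y) ^ (Suc a + j) * y"
      by (simp add: algebra_simps)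
    also have "\<dots> = x ^ Suc a * (s1 + s2 * y) + y ^ Suc j * (t1 * x + t2)"
      unfolding 1 2 by (simp add: algebra_simps)
    finally show ?case by blast
  qed
qed

lemma PR_powers:
  assumes "PR p m n"
  shows "\<exists>b S T. cyclotomic n ^ b = cyclotomic m ^ a * S + smult (int p ^ j) T"
proof -
  obtain c u where "(of_nat p :: int poly) dvd cyclotomic n ^ c - cyclotomic m * u"
    using assms unfolding PR_def by blast
  then obtain w where w: "cyclotomic n ^ c - cyclotomic m * u = of_nat p * w" by (elim dvdE)
  hence e: "cyclotomic n ^ c = cyclotomic m * u + of_nat p * w" by (simp add: algebra_simps)
  obtain s t where st: "(cyclotomic m * u + of_nat p * w) ^ (a + j) =
      (cyclotomic m * u) ^ a * s + (of_nat p * w) ^ j * t"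
    using ideal_pow by blast
  have c1: "(of_nat p :: int poly) ^ j = [:int p ^ j:]" by (simp add: of_nat_poly poly_const_pow)
  have c2: "\<And>Z. [:int p ^ j:] * Z = smult (int p ^ j) Z" by (simp add: mult_pCons_left)
  have y: "(of_nat p * w) ^ j * t = smult (int p ^ j) (w ^ j * t)"
    by (simp only: power_mult_distrib c1 c2 mult_smult_left)
  have x: "(cyclotomic m * u) ^ a * s = cyclotomic m ^ a * (u ^ a * s)"
    by (simp only: power_mult_distrib mult.assoc)
  have "cyclotomic n ^ (c * (a + j)) = (cyclotomic m * u + of_nat p * w) ^ (a + j)"
    by (simp only: power_mult e)
  also have "\<dots> = cyclotomic m ^ a * (u ^ a * s) + smult (int p ^ j) (w ^ j * t)"
    by (simp only: st x y)
  finally have "cyclotomic n ^ (c * (a + j)) = cyclotomic m ^ a * (u ^ a * s) + smult (int p ^ j) (w ^ j * t)" .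
  thus ?thesis by blast
qed

section \<open>Integer multiples\<close>

lemma zmult_0 [simp]: "zmult 0 x = 0"
  by (simp add: zmult_def)

lemma zmult_zero_right [simp]: "zmult k 0 = 0"
  by (simp add: zmult_def)

lemma zmult_plus1: "zmult (k + 1) x = zmult k x + x"
proof (cases "k \<ge> 0")
  case True
  then have "nat (k + 1) = Suc (nat k)" by simp
  thus ?thesis using True by (simp add: zmult_def)
next
  case False
  then have k: "k + 1 \<le> 0" by simp
  have e: "nat (- k) = Suc (nat (- (k + 1)))" using k by simp
  have "zmult (k + 1) x = - (\<Sum>i<nat (- (k + 1)). x)"
    using k by (cases "k + 1 = 0") (simp_all add: zmult_def)
  moreover have "zmult k x = - (\<Sum>i<nat (- (k + 1)). x) - x"
    using False by (simp add: zmult_def e)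
  ultimately show ?thesis by simp
qed

lemma zmult_minus1: "zmult (k - 1) x = zmult k x - x"
  using zmult_plus1[of "k - 1" x] by (simp add: algebra_simps)

lemma zmult_add_left: "zmult (a + b) x = zmult a x + zmult b x"
proof (induction b rule: int_induct[where k = 0])
  case base
  then show ?case by simp
next
  case (step1 i)
  have "zmult (a + (i + 1)) x = zmult ((a + i) + 1) x" by (simp only: add.assoc)
  also have "\<dots> = zmult (a + i) x + x" by (rule zmult_plus1)
  also have "\<dots> = zmult a x + (zmult i x + x)" using step1 by (simp add: add.assoc)
  also have "zmult i x + x = zmult (i + 1) x" by (simp only: zmult_plus1)
  finally show ?case .
next
  case (step2 i)
  have "zmult (a + (i - 1)) x = zmult ((a + i) - 1) x" by (simp only: add_diff_eq)
  also have "\<dots> = zmult (a + i) x - x" by (rule zmult_minus1)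
  also have "\<dots> = zmult a x + (zmult i x - x)" using step2 by (simp add: add_diff_eq)
  also have "zmult i x - x = zmult (i - 1) x" by (simp only: zmult_minus1)
  finally show ?case .
qed

lemma zmult_add_right: "zmult k (x + y) = zmult k x + zmult k y"
proof (induction k rule: int_induct[where k = 0])
  case base
  then show ?case by simp
next
  case (step1 i)
  then show ?case by (simp only: zmult_plus1) (simp add: add_ac)
next
  case (step2 i)
  then show ?case by (simp only: zmult_minus1) (simp add: algebra_simps)
qed

lemma zmult_neg_right: "zmult k (- x) = - zmult k x"
proof -
  have "zmult k x + zmult k (- x) = 0" using zmult_add_right[of k x "- x"] by simp
  thus ?thesis by (metis neg_eq_iff_add_eq_0)
qed

lemma zmult_diff_right: "zmult k (x - y) = zmult k x - zmult k y"
  using zmult_add_right[of k x "- y"] zmult_neg_right[of k y] by simp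

lemma zmult_neg_left: "zmult (- a) x = - zmult a x"
proof -
  have "zmult a x + zmult (- a) x = 0" using zmult_add_left[of a "- a" x] by simp
  thus ?thesis by (metis neg_eq_iff_add_eq_0)
qed

lemma zmult_1 [simp]: "zmult 1 x = x"
  using zmult_plus1[of 0 x] by simp

lemma zmult_mult: "zmult (a * b) x = zmult a (zmult b x)"
proof (induction a rule: int_induct[where k = 0])
  case base
  then show ?case by simp
next
  case (step1 i)
  then show ?case by (simp only: distrib_right mult_1_left zmult_add_left zmult_plus1 zmult_1)
next
  case (step2 i)
  have "zmult ((i - 1) * b) x = zmult (i * b + - b) x" by (simp add: algebra_simps)
  also have "\<dots> = zmult (i - 1) (zmult b x)"
    using step2 by (simp only: zmult_add_left zmult_neg_left zmult_minus1) simp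
  finally show ?case .
qed

lemma zmult_sum: "zmult k (\<Sum>i\<in>A. f i) = (\<Sum>i\<in>A. zmult k (f i))"
  by (induction A rule: infinite_finite_induct) (simp_all add: zmult_add_right)

section \<open>The action\<close>

lemma coeff_shift: "coeff ((pCons 0 ^^ i) P) k = (if i \<le> k then coeff P (k - i) else 0)"
proof (induction i arbitrary: k)
  case 0 then show ?case by simp
next
  case (Suc i)
  show ?case by (cases k) (simp_all add: Suc.IH coeff_pCons)
qed

lemma coeff_zmap: "coeff (map_poly (zmult c) p) n = zmult c (coeff p n)"
  by (simp add: coeff_map_poly)

lemma coeff_act: "coeff (zpoly_act f u) k = (\<Sum>i\<le>k. zmult (coeff f i) (coeff u (k - i)))"
proof -
  have "coeff (zpoly_act f u) k =
      (\<Sum>i\<le>degree f. if i \<le> k then zmult (coeff f i) (coeff u (k - i)) else 0)"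
    by (simp add: zpoly_act_def coeff_sum coeff_shift coeff_zmap cong: if_cong)
  also have "\<dots> = (\<Sum>i\<le>degree f + k. if i \<le> k then zmult (coeff f i) (coeff u (k - i)) else 0)"
    by (rule sum.mono_neutral_left) (auto simp: coeff_eq_0)
  also have "\<dots> = (\<Sum>i\<le>k. zmult (coeff f i) (coeff u (k - i)))"
    by (rule sum.mono_neutral_cong_right) auto
  finally show ?thesis .
qed

lemma act_add_left: "zpoly_act (f + g) u = zpoly_act f u + zpoly_act g u"
  by (simp add: poly_eq_iff coeff_act zmult_add_left sum.distrib)

lemma act_add_right: "zpoly_act f (u + v) = zpoly_act f u + zpoly_act f v"
  by (simp add: poly_eq_iff coeff_act zmult_add_right sum.distrib)

lemma act_zero_right [simp]: "zpoly_act f 0 = 0"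
  by (simp add: poly_eq_iff coeff_act)

lemma act_zero_left [simp]: "zpoly_act 0 u = 0"
  by (simp add: poly_eq_iff coeff_act)

lemma act_diff_right: "zpoly_act f (u - v) = zpoly_act f u - zpoly_act f v"
  by (simp add: poly_eq_iff coeff_act zmult_diff_right sum_subtractf)

lemma zmap_add: "map_poly (zmult c) (u + v) = map_poly (zmult c) u + map_poly (zmult c) v"
  by (simp add: poly_eq_iff coeff_zmap zmult_add_right)

lemma zmap_zero_left: "map_poly (zmult 0) u = 0"
  by (simp add: poly_eq_iff coeff_zmap)

lemma zmap_one: "map_poly (zmult 1) u = u"
  by (simp add: poly_eq_iff coeff_zmap)

lemma act_pCons: "zpoly_act (pCons a f) u = map_poly (zmult a) u + pCons 0 (zpoly_act f u)"
proof (rule poly_eqI)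
  fix k
  show "coeff (zpoly_act (pCons a f) u) k = coeff (map_poly (zmult a) u + pCons 0 (zpoly_act f u)) k"
  proof (cases k)
    case 0 then show ?thesis by (simp add: coeff_act coeff_zmap)
  next
    case (Suc k')
    have "coeff (zpoly_act (pCons a f) u) k =
        zmult a (coeff u (Suc k')) + (\<Sum>i\<le>k'. zmult (coeff f i) (coeff u (k' - i)))"
      unfolding coeff_act Suc sum.atMost_Suc_shift by simp
    then show ?thesis by (simp add: Suc coeff_act coeff_zmap)
  qed
qed

lemma act_smult: "zpoly_act (smult c g) u = map_poly (zmult c) (zpoly_act g u)"
  by (simp add: poly_eq_iff coeff_act coeff_zmap zmult_mult zmult_sum)

lemma act_mult: "zpoly_act (f * g) u = zpoly_act f (zpoly_act g u)"
proof (induction f rule: pCons_induct)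
  case 0 then show ?case by simp
next
  case (pCons a f)
  have "zpoly_act (pCons a f * g) u = zpoly_act (smult a g + pCons 0 (f * g)) u"
    by (simp add: mult_pCons_left)
  also have "\<dots> = map_poly (zmult a) (zpoly_act g u) + pCons 0 (zpoly_act f (zpoly_act g u))"
    by (simp add: act_add_left act_smult act_pCons zmap_zero_left pCons.IH)
  also have "\<dots> = zpoly_act (pCons a f) (zpoly_act g u)"
    by (simp add: act_pCons)
  finally show ?case .
qed

lemma act_const: "zpoly_act [:c:] u = map_poly (zmult c) u"
  by (simp add: act_pCons)

lemma act_one: "zpoly_act 1 u = u"
  by (simp add: one_pCons act_pCons zmap_one)

section \<open>Division by monic polynomials\<close>

lemma act_top:
  assumes f: "lead_coeff f = 1" and u: "u \<noteq> 0"
  shows "coeff (zpoly_act f u) (degree f + degree u) = lead_coeff u"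
proof -
  let ?K = "degree f + degree u"
  have "coeff (zpoly_act f u) ?K = (\<Sum>i\<le>?K. zmult (coeff f i) (coeff u (?K - i)))"
    by (rule coeff_act)
  also have "\<dots> = zmult (coeff f (degree f)) (coeff u (?K - degree f))"
  proof -
    have fin: "finite {..?K}" by simp
    have mem: "degree f \<in> {..?K}" by simp
    have z: "(\<Sum>i\<in>{..?K} - {degree f}. zmult (coeff f i) (coeff u (?K - i))) = 0"
    proof (rule sum.neutral, rule ballI)
      fix i assume i: "i \<in> {..?K} - {degree f}"
      show "zmult (coeff f i) (coeff u (?K - i)) = 0"
      proof (cases "i < degree f")
        case True
        hence "coeff u (?K - i) = 0" by (intro coeff_eq_0) simp
        thus ?thesis by simp
      next
        case False
        hence "coeff f i = 0" using i by (intro coeff_eq_0) auto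
        thus ?thesis by simp
      qed
    qed
    show ?thesis
      using sum.remove[OF fin mem, of "\<lambda>i. zmult (coeff f i) (coeff u (?K - i))"] z by simp
  qed
  also have "\<dots> = lead_coeff u" using f by simp
  finally show ?thesis .
qed

lemma act_high:
  assumes "degree f + degree u < k"
  shows "coeff (zpoly_act f u) k = 0"
proof -
  have "zmult (coeff f i) (coeff u (k - i)) = 0" if "i \<le> k" for i
  proof (cases "i \<le> degree f")
    case True
    hence "coeff u (k - i) = 0" using assms by (intro coeff_eq_0) simp
    thus ?thesis by simp
  next
    case False
    hence "coeff f i = 0" by (intro coeff_eq_0) simp
    thus ?thesis by simp
  qed
  thus ?thesis by (simp add: coeff_act)
qed

lemma act_nonzero:
  assumes f: "lead_coeff f = 1" and u: "u \<noteq> 0"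
  shows "zpoly_act f u \<noteq> 0 \<and> degree f \<le> degree (zpoly_act f u)"
proof -
  have "coeff (zpoly_act f u) (degree f + degree u) \<noteq> 0"
    using act_top[OF f u] u by simp
  hence "degree f + degree u \<le> degree (zpoly_act f u)" by (rule le_degree)
  moreover have "zpoly_act f u \<noteq> 0"
    using \<open>coeff (zpoly_act f u) (degree f + degree u) \<noteq> 0\<close> by auto
  ultimately show ?thesis by simp
qed

lemma div_exists:
  assumes f: "lead_coeff f = 1"
  shows "\<exists>u r. d = zpoly_act f u + r \<and> (r = 0 \<or> degree r < degree f)"
proof (induction "degree d" arbitrary: d rule: less_induct)
  case less
  show ?case
  proof (cases "d = 0 \<or> degree d < degree f")
    case True
    thus ?thesis by (intro exI[of _ 0] exI[of _ d]) auto
  next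
    case False
    hence d0: "d \<noteq> 0" and dg: "degree f \<le> degree d" by auto
    define c where "c = lead_coeff d"
    define e where "e = degree d - degree f"
    define m where "m = monom c e"
    have c0: "c \<noteq> 0" using d0 c_def by simp
    have m0: "m \<noteq> 0" using c0 m_def by simp
    have degm: "degree m = e" using c0 m_def by (simp add: degree_monom_eq)
    have leadm: "lead_coeff m = c" using degm m_def by simp
    have t1: "coeff (zpoly_act f m) (degree d) = c"
      using act_top[OF f m0] degm leadm dg e_def by simp
    have t2: "coeff (zpoly_act f m) k = 0" if "k > degree d" for k
      using act_high[of f m k] that degm dg e_def by simp
    define d' where "d' = d - zpoly_act f m"
    have z: "coeff d' k = 0" if "k \<ge> degree d" for k
    proof (cases "k = degree d")
      case True thus ?thesis using t1 c_def d'_def by simp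
    next
      case False
      hence "k > degree d" using that by simp
      thus ?thesis using t2 d'_def by (simp add: coeff_eq_0)
    qed
    show ?thesis
    proof (cases "d' = 0")
      case True
      hence "d = zpoly_act f m + 0" using d'_def by simp
      thus ?thesis by blast
    next
      case False
      hence "coeff d' (degree d') \<noteq> 0" by simp
      hence "degree d' < degree d" using z by (meson not_le)
      then obtain u r where ur: "d' = zpoly_act f u + r" "r = 0 \<or> degree r < degree f"
        using less by blast
      have "d = zpoly_act f (u + m) + r"
        using ur(1) d'_def by (simp add: act_add_right algebra_simps)
      thus ?thesis using ur(2) by blast
    qed
  qed
qed

lemma div_unique:
  assumes f: "lead_coeff f = 1"
    and eq: "zpoly_act f u + r = zpoly_act f u' + r'"
    and r: "r = 0 \<or> degree r < degree f" and r': "r' = 0 \<or> degree r' < degree f"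
  shows "r = r'"
proof (rule ccontr)
  assume ne: "r \<noteq> r'"
  have a: "zpoly_act f (u - u') = r' - r" using eq by (simp add: act_diff_right algebra_simps)
  have "u - u' \<noteq> 0" using a ne by auto
  hence b: "degree f \<le> degree (r' - r)" using act_nonzero[OF f] a by metis
  show False
  proof (cases "degree f = 0")
    case True
    thus False using r r' ne by simp
  next
    case False
    hence "degree r < degree f" "degree r' < degree f" using r r' by auto
    hence "degree (r' - r) < degree f" by (rule degree_diff_less[rotated])
    thus False using b by simp
  qed
qed

lemma zmap_small:
  assumes "r = 0 \<or> degree r < degree f"
  shows "map_poly (zmult c) r = 0 \<or> degree (map_poly (zmult c) r) < degree f"
proof -
  have "degree (map_poly (zmult c) r) \<le> degree r"
    by (rule degree_le) (auto simp: coeff_zmap coeff_eq_0)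
  thus ?thesis using assms by auto
qed

lemma zmap_act: "map_poly (zmult c) (zpoly_act f u) = zpoly_act f (map_poly (zmult c) u)"
proof -
  have e: "f * [:c:] = smult c f" by (subst mult.commute) simp
  have "map_poly (zmult c) (zpoly_act f u) = zpoly_act (smult c f) u" by (simp add: act_smult)
  also have "\<dots> = zpoly_act (f * [:c:]) u" by (simp only: e)
  also have "\<dots> = zpoly_act f (map_poly (zmult c) u)" by (simp only: act_mult act_const)
  finally show ?thesis .
qed

lemma sep_lemma:
  fixes d :: "'a::ab_group_add poly"
  assumes f: "lead_coeff f = 1" and sep: "padic_separated TYPE('a) p"
    and H: "\<And>j. \<exists>u w. d = zpoly_act f u + map_poly (zmult (int p ^ j)) w"
  shows "\<exists>u. d = zpoly_act f u"
proof -
  obtain u0 r0 where d: "d = zpoly_act f u0 + r0" and r0: "r0 = 0 \<or> degree r0 < degree f"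
    using div_exists[OF f] by blast
  have "coeff r0 k \<in> (\<Inter>j. range (zmult (int p ^ j) :: 'a \<Rightarrow> 'a))" for k
  proof
    fix j
    define c where "c = int p ^ j"
    obtain u w where dw: "d = zpoly_act f u + map_poly (zmult c) w" using H c_def by blast
    obtain u1 r1 where w: "w = zpoly_act f u1 + r1" and r1: "r1 = 0 \<or> degree r1 < degree f"
      using div_exists[OF f] by blast
    have "d = zpoly_act f (u + map_poly (zmult c) u1) + map_poly (zmult c) r1"
      using dw w by (simp add: zmap_add zmap_act act_add_right algebra_simps)
    hence "r0 = map_poly (zmult c) r1"
      using div_unique[OF f _ r0 zmap_small[OF r1]] d by metis
    hence "coeff r0 k = zmult c (coeff r1 k)" by (simp add: coeff_zmap)
    thus "coeff r0 k \<in> range (zmult (int p ^ j))" using c_def by simp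
  qed
  hence "coeff r0 k = 0" for k using sep unfolding padic_separated_def by auto
  hence "r0 = 0" by (simp add: poly_eq_iff)
  thus ?thesis using d by auto
qed

lemma zcoset_eq: "zcoset f r = zcoset f s \<longleftrightarrow> (\<exists>w. r - s = zpoly_act f w)"
proof
  assume h: "zcoset f r = zcoset f s"
  have "r \<in> zcoset f r" unfolding zcoset_def zsub_def
    by (rule CollectI, rule exI[of _ 0]) (simp add: image_iff exI[of _ 0])
  hence "r \<in> zcoset f s" using h by simp
  then obtain w where "r = s + zpoly_act f w" unfolding zcoset_def zsub_def by auto
  thus "\<exists>w. r - s = zpoly_act f w" by (intro exI[of _ w]) simp
next
  assume "\<exists>w. r - s = zpoly_act f w"
  then obtain w where w: "r = s + zpoly_act f w" by (metis add.commute diff_add_cancel)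
  show "zcoset f r = zcoset f s"
  proof
    show "zcoset f r \<subseteq> zcoset f s"
    proof
      fix z assume "z \<in> zcoset f r"
      then obtain h where "z = r + zpoly_act f h" unfolding zcoset_def zsub_def by auto
      hence "z = s + zpoly_act f (w + h)" using w by (simp add: act_add_right algebra_simps)
      thus "z \<in> zcoset f s" unfolding zcoset_def zsub_def by blast
    qed
  next
    show "zcoset f s \<subseteq> zcoset f r"
    proof
      fix z assume "z \<in> zcoset f s"
      then obtain h where "z = s + zpoly_act f h" unfolding zcoset_def zsub_def by auto
      hence "z = r + zpoly_act f (h - w)" using w by (simp add: act_diff_right algebra_simps)
      thus "z \<in> zcoset f r" unfolding zcoset_def zsub_def by blast
    qed
  qed
qed

lemma cm_mono: "U \<subseteq> V \<Longrightarrow> cyc_mon U \<subseteq> cyc_mon V"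
  unfolding cyc_mon_def by blast

lemma cm_mult:
  assumes "g \<in> cyc_mon U"
  shows "g * cyclotomic m ^ a \<in> cyc_mon (insert m U)"
proof -
  obtain M where M: "g = prod_mset (image_mset cyclotomic M)" "set_mset M \<subseteq> U"
    using assms unfolding cyc_mon_def by blast
  have "g * cyclotomic m ^ a = prod_mset (image_mset cyclotomic (M + replicate_mset a m))"
    using M by simp
  moreover have "set_mset (M + replicate_mset a m) \<subseteq> insert m U" using M by auto
  ultimately show ?thesis unfolding cyc_mon_def by blast
qed

lemma cm_split:
  assumes "f \<in> cyc_mon (insert m U)"
  shows "\<exists>g a. g \<in> cyc_mon U \<and> f = g * cyclotomic m ^ a"
proof -
  obtain M where M: "f = prod_mset (image_mset cyclotomic M)" "set_mset M \<subseteq> insert m U"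
    using assms unfolding cyc_mon_def by blast
  define M1 where "M1 = filter_mset (\<lambda>x. x \<noteq> m) M"
  have "M = M1 + filter_mset (\<lambda>x. x = m) M"
    unfolding M1_def by (metis multiset_partition add.commute)
  also have "filter_mset (\<lambda>x. x = m) M = replicate_mset (count M m) m"
    by (rule filter_eq_replicate_mset)
  finally have MM: "M = M1 + replicate_mset (count M m) m" .
  have "f = prod_mset (image_mset cyclotomic M1) * cyclotomic m ^ count M m"
    using M(1) by (subst (asm) MM) simp
  moreover have "set_mset M1 \<subseteq> U" using M(2) unfolding M1_def by auto
  ultimately show ?thesis unfolding cyc_mon_def by blast
qed

lemma cm_monic:
  assumes "0 \<notin> S" "f \<in> cyc_mon S"
  shows "lead_coeff f = 1"
proof -
  obtain M where M: "f = prod_mset (image_mset cyclotomic M)" "set_mset M \<subseteq> S"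
    using assms unfolding cyc_mon_def by blast
  have "set_mset M \<subseteq> S \<Longrightarrow> lead_coeff (prod_mset (image_mset cyclotomic M)) = 1"
  proof (induction M)
    case empty then show ?case by simp
  next
    case (add x M)
    have "x > 0" using add.prems assms(1) by (cases x) auto
    thus ?case using add by (simp add: lead_coeff_mult cyclotomic_monic)
  qed
  thus ?thesis using M by simp
qed

lemma compl_ex:
  assumes "x \<in> completion S" "f \<in> cyc_mon S"
  shows "\<exists>r. x f = zcoset f r"
  using assms unfolding completion_def by blast

lemma compl_compat:
  assumes "x \<in> completion S" "f \<in> cyc_mon S" "g \<in> cyc_mon S" "f dvd g" "x g = zcoset g r"
  shows "x f = zcoset f r"
  using assms unfolding completion_def by blast

lemma step:
  fixes x y :: "int poly \<Rightarrow> 'a::ab_group_add poly set"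
  assumes x: "x \<in> completion S" and y: "y \<in> completion S" and S0: "0 \<notin> S"
    and US: "U \<subseteq> S" and n: "n \<in> U" and m: "m \<in> S"
    and agree: "\<forall>g\<in>cyc_mon U. x g = y g"
    and sep: "padic_separated TYPE('a) p"
    and pw: "\<And>a j. \<exists>b Sx T. cyclotomic n ^ b = cyclotomic m ^ a * Sx + smult (int p ^ j) T"
  shows "\<forall>f\<in>cyc_mon (insert m U). x f = y f"
proof
  fix f assume f: "f \<in> cyc_mon (insert m U)"
  obtain g a where g: "g \<in> cyc_mon U" and fg: "f = g * cyclotomic m ^ a"
    using cm_split[OF f] by blast
  have mUS: "insert m U \<subseteq> S" using US m by auto
  have fS: "f \<in> cyc_mon S" using f cm_mono[OF mUS] by blast
  have fmon: "lead_coeff f = 1" using cm_monic[OF S0 fS] .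
  obtain r0 where r0: "x f = zcoset f r0" using compl_ex[OF x fS] by blast
  obtain s0 where s0: "y f = zcoset f s0" using compl_ex[OF y fS] by blast
  have "\<exists>u w. r0 - s0 = zpoly_act f u + map_poly (zmult (int p ^ j)) w" for j
  proof -
    obtain b Sx T where bST: "cyclotomic n ^ b = cyclotomic m ^ a * Sx + smult (int p ^ j) T"
      using pw by blast
    define g' where "g' = g * cyclotomic n ^ b"
    define h where "h = f * cyclotomic n ^ b"
    have g'U: "g' \<in> cyc_mon U"
      using cm_mult[OF g, of n b] n unfolding g'_def by (simp add: insert_absorb)
    have g'S: "g' \<in> cyc_mon S" using g'U cm_mono[OF US] by blast
    have "h = g' * cyclotomic m ^ a" unfolding h_def g'_def fg by (simp add: algebra_simps)
    hence hS: "h \<in> cyc_mon S" using cm_mult[OF g'U, of m a] cm_mono[OF mUS] by auto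
    have fh: "f dvd h" unfolding h_def by simp
    have g'h: "g' dvd h" unfolding h_def g'_def fg by (simp add: algebra_simps)
    obtain r where r: "x h = zcoset h r" using compl_ex[OF x hS] by blast
    obtain s where s: "y h = zcoset h s" using compl_ex[OF y hS] by blast
    have "x f = zcoset f r" by (rule compl_compat[OF x fS hS fh r])
    then obtain A where A: "r0 - r = zpoly_act f A" using r0 zcoset_eq by metis
    have "y f = zcoset f s" by (rule compl_compat[OF y fS hS fh s])
    then obtain B where B: "s0 - s = zpoly_act f B" using s0 zcoset_eq by metis
    have "x g' = zcoset g' r" by (rule compl_compat[OF x g'S hS g'h r])
    moreover have "y g' = zcoset g' s" by (rule compl_compat[OF y g'S hS g'h s])
    moreover have "x g' = y g'" using agree g'U by blast
    ultimately obtain w where w: "r - s = zpoly_act g' w" using zcoset_eq by metis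
    have g'e: "g' = f * Sx + smult (int p ^ j) (g * T)"
      unfolding g'_def bST fg by (simp add: algebra_simps)
    have "zpoly_act g' w = zpoly_act f (zpoly_act Sx w) + map_poly (zmult (int p ^ j)) (zpoly_act (g * T) w)"
      unfolding g'e by (simp only: act_add_left act_mult act_smult)
    hence "r0 - s0 = zpoly_act f (A + zpoly_act Sx w - B) + map_poly (zmult (int p ^ j)) (zpoly_act (g * T) w)"
      using A B w by (simp add: act_add_right act_diff_right algebra_simps)
    thus ?thesis by blast
  qed
  then obtain u where "r0 - s0 = zpoly_act f u" using sep_lemma[OF fmon sep] by blast
  hence "zcoset f r0 = zcoset f s0" using zcoset_eq by blast
  thus "x f = y f" using r0 s0 by simp
qed

lemma equiv_PR:
  assumes "equiv_A TYPE('a::ab_group_add) m n" "m > 0" "n > 0"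
    and "\<not> (UNIV :: 'a set) = {0}" "m \<noteq> n"
  shows "\<exists>p. padic_separated TYPE('a) p \<and> PR p m n"
proof -
  obtain p k where p: "prime p" and mk: "m = n * p ^ k \<or> n = m * p ^ k"
    and sep: "padic_separated TYPE('a) p"
    using assms unfolding equiv_A_def by blast
  have "PR p m n" using mk PR_powk[OF p] assms(2,3) by blast
  thus ?thesis using sep by blast
qed

theorem theorem7p6:
  fixes S S' :: "nat set"
  assumes "0 \<notin> S"
    and "S' \<subseteq> S"
    and "\<forall>n\<in>S. \<exists>ns :: nat list. ns \<noteq> [] \<and> hd ns \<in> S' \<and> last ns = n \<and> set ns \<subseteq> S \<and>
           (\<forall>i. Suc i < length ns \<longrightarrow> equiv_A TYPE('a::ab_group_add) (ns ! i) (ns ! Suc i))"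
  shows "inj_on (rho S') (completion S :: (int poly \<Rightarrow> 'a poly set) set)"
proof (rule inj_onI)
  fix x y :: "int poly \<Rightarrow> 'a poly set"
  assume x: "x \<in> completion S" and y: "y \<in> completion S" and eq: "rho S' x = rho S' y"
  show "x = y"
  proof (rule ext)
    fix f
    show "x f = y f"
    proof (cases "f \<in> cyc_mon S")
      case False
      thus ?thesis using x y by (simp add: completion_def)
    next
      case fS: True
      show ?thesis
      proof (cases "(UNIV :: 'a set) = {0}")
        case True
        have allz: "q = 0" for q :: "'a poly"
        proof (rule poly_eqI)
          fix k
          have "coeff q k \<in> {0}" using True by (metis UNIV_I)
          thus "coeff q k = coeff 0 k" by simp
        qed
        obtain r where r: "x f = zcoset f r" using compl_ex[OF x fS] by blast
        obtain s where s: "y f = zcoset f s" using compl_ex[OF y fS] by blast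
        have "r = s" using allz[of r] allz[of s] by simp
        thus ?thesis using r s by simp
      next
        case nz: False
        define Good where "Good U \<longleftrightarrow> U \<subseteq> S \<and> (\<forall>g\<in>cyc_mon U. x g = y g)" for U
        have G0: "Good S'"
          unfolding Good_def
        proof (intro conjI ballI)
          show "S' \<subseteq> S" by (rule assms(2))
          fix g assume g: "g \<in> cyc_mon S'"
          have "rho S' x g = rho S' y g" using eq by simp
          thus "x g = y g" using g by (simp add: rho_def)
        qed
        have ext1: "Good (insert m U)"
          if G: "Good U" and n: "n \<in> U" and m: "m \<in> S" and e: "equiv_A TYPE('a) n m" for U n m
        proof (cases "m = n")
          case True
          thus ?thesis using G n by (simp add: insert_absorb)
        next
          case False
          have US: "U \<subseteq> S" using G Good_def by simp
          have n0: "n > 0" using n US assms(1) by (cases n) auto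
          have m0: "m > 0" using m assms(1) by (cases m) auto
          have e': "equiv_A TYPE('a) m n"
            using e unfolding equiv_A_def by blast
          obtain p where sep: "padic_separated TYPE('a) p" and pr: "PR p m n"
            using equiv_PR[OF e' m0 n0 nz False] by blast
          have "\<forall>f\<in>cyc_mon (insert m U). x f = y f"
            by (rule step[OF x y assms(1) US n m _ sep PR_powers[OF pr]]) (use G Good_def in blast)
          thus ?thesis using US m Good_def by simp
        qed
        have chain: "Good (U \<union> set ns)"
          if G: "Good U" and S'U: "S' \<subseteq> U" and ne: "ns \<noteq> []" and hd: "hd ns \<in> S'"
            and sub: "set ns \<subseteq> S"
            and ch: "\<forall>i. Suc i < length ns \<longrightarrow> equiv_A TYPE('a) (ns ! i) (ns ! Suc i)"
          for U ns
        proof -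
          have "\<forall>i. i < length ns \<longrightarrow> Good (U \<union> set (take (Suc i) ns))"
          proof (intro allI)
            fix i
            show "i < length ns \<longrightarrow> Good (U \<union> set (take (Suc i) ns))"
            proof (induction i)
              case 0
              have "take (Suc 0) ns = [hd ns]" using ne by (cases ns) auto
              hence "U \<union> set (take (Suc 0) ns) = U" using hd S'U by auto
              thus ?case using G by simp
            next
              case (Suc i)
              show ?case
              proof
                assume i: "Suc i < length ns"
                hence Gi: "Good (U \<union> set (take (Suc i) ns))" using Suc.IH by simp
                have tk: "take (Suc (Suc i)) ns = take (Suc i) ns @ [ns ! Suc i]"
                  using i by (simp add: take_Suc_conv_app_nth)
                have nin: "ns ! i \<in> U \<union> set (take (Suc i) ns)"
                  using i by (auto simp: in_set_conv_nth intro!: exI[of _ i])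
                have mS: "ns ! Suc i \<in> S" using i sub nth_mem by blast
                have "Good (insert (ns ! Suc i) (U \<union> set (take (Suc i) ns)))"
                  using ext1[OF Gi nin mS] ch i by blast
                thus "Good (U \<union> set (take (Suc (Suc i)) ns))" unfolding tk by simp
              qed
            qed
          qed
          moreover have "length ns - 1 < length ns" using ne by simp
          ultimately have "Good (U \<union> set (take (Suc (length ns - 1)) ns))" by blast
          moreover have L: "Suc (length ns - 1) = length ns" using ne by simp
          ultimately show ?thesis by simp
        qed
        have fin: "\<exists>U. Good U \<and> S' \<subseteq> U \<and> F \<subseteq> U" if "finite F" "F \<subseteq> S" for F
          using that
        proof (induction F rule: finite_induct)
          case empty
          thus ?case using G0 by blast
        next
          case (insert n F)
          then obtain U where U: "Good U" "S' \<subseteq> U" "F \<subseteq> U" by auto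
          have "n \<in> S" using insert.prems by simp
          then obtain ns where ns: "ns \<noteq> []" "hd ns \<in> S'" "last ns = n" "set ns \<subseteq> S"
            "\<forall>i. Suc i < length ns \<longrightarrow> equiv_A TYPE('a) (ns ! i) (ns ! Suc i)"
            using assms(3) by blast
          have "Good (U \<union> set ns)" using chain[OF U(1) U(2) ns(1) ns(2) ns(4) ns(5)] .
          moreover have "n \<in> set ns" using ns(1) ns(3) last_in_set by blast
          ultimately show ?case using U by blast
        qed
        obtain M where M: "f = prod_mset (image_mset cyclotomic M)" "set_mset M \<subseteq> S"
          using fS unfolding cyc_mon_def by blast
        obtain U where U: "Good U" "set_mset M \<subseteq> U" using fin[OF _ M(2)] by blast
        have "f \<in> cyc_mon U" using M(1) U(2) unfolding cyc_mon_def by blast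
        thus ?thesis using U(1) Good_def by blast
      qed
    qed
  qed
qed

end
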